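(* Let $r\ge 3$ and $1\le t\le r-2$ be integers. Let $\mathcal F\subseteq X_1\times\dots\times X_r$ be a non-trivial $t$-intersecting family that is $\ell$-shift-resistant for some $\ell\in[r]$. Then $|\bigcap\mathcal F|=t-1$, and there exists $x\in X_\ell\setminus\{1\}$ such that: $N_{\mathcal F}(x,\ell)\ne\emptyset$; $N_{\mathcal F}(1,\ell)\ne\emptyset$; for every $A\in N_{\mathcal F}(x,\ell)$, the sequence obtained from $A$ by replacing its $\ell$-th coordinate by $1$ does not belong to $\mathcal F$; and $N_{\mathcal F}(y,\ell)=\emptyset$ for every $y\in X_\ell\setminus\{1,x\}$.
   Context: Let $X_\ell=[n_\ell]$ for $1\le \ell\le r$, with $n_\ell\ge2$. For $A,B\in X_1\times\dots\times X_r$, write $A\cap B=\{\ell:A[\ell]=B[\ell]\}$ ($A[\ell]$ the $\ell$-th coordinate). $\mathcal F$ is $t$-intersecting if $|A\cap B|\ge t$ for all $A,B\in\mathcal F$; $\bigcap\mathcal F$ is the set of coordinates $\ell$ on which all members of $\mathcal F$ agree; a $t$-intersecting $\mathcal F$ is non-trivial if $|\bigcap\mathcal F|<t$ and trivial otherwise. For $1\le\ell\le r$ and $1<j\le n_\ell$, the shift $S^{(\ell)}_j$ acts on $F\in\mathcal F$ by: if $F[\ell]=j$ and the sequence $F'$ obtained from $F$ by replacing its $\ell$-th coordinate by $1$ is not in $\mathcal F$, then $S^{(\ell)}_j(F)=F'$; otherwise $S^{(\ell)}_j(F)=F$; and $S^{(\ell)}_j(\mathcal F)=\{S^{(\ell)}_j(F):F\in\mathcal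 F\}$. A non-trivial $t$-intersecting family $\mathcal F$ is $\ell$-shift-resistant if there exists $x\in X_\ell\setminus\{1\}$ such that $|\bigcap S^{(\ell)}_x(\mathcal F)|=t$. For $x\in X_\ell$, $N_{\mathcal F}(x,\ell)=\{A\in\mathcal F:A[\ell]=x\}$. *)

theory Defs
  imports "HOL-Library.FuncSet"
begin

text \<open>Sequences A in X_1 x ... x X_r are functions nat => nat, with coordinates
  1..r and X_l = {1..n l}; the ambient space is PiE {1..r} (\<lambda>l. {1..n l}).\<close>

definition space :: "nat \<Rightarrow> (nat \<Rightarrow> nat) \<Rightarrow> (nat \<Rightarrow> nat) set" where
  "space r n = PiE {1..r} (\<lambda>l. {1..n l})"

definition agree :: "nat \<Rightarrow> (nat \<Rightarrow> nat) \<Rightarrow> (nat \<Rightarrow> nat) \<Rightarrow> nat set" where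
  "agree r A B = {l \<in> {1..r}. A l = B l}"

definition t_intersecting :: "nat \<Rightarrow> nat \<Rightarrow> (nat \<Rightarrow> nat) set \<Rightarrow> bool" where
  "t_intersecting r t F \<longleftrightarrow> (\<forall>A\<in>F. \<forall>B\<in>F. card (agree r A B) \<ge> t)"

definition common :: "nat \<Rightarrow> (nat \<Rightarrow> nat) set \<Rightarrow> nat set" where
  "common r F = {l \<in> {1..r}. \<forall>A\<in>F. \<forall>B\<in>F. A l = B l}"

definition nontrivial_t_intersecting :: "nat \<Rightarrow> nat \<Rightarrow> (nat \<Rightarrow> nat) set \<Rightarrow> bool" where
  "nontrivial_t_intersecting r t F \<longleftrightarrow> t_intersecting r t F \<and> card (common r F) < t"

definition shift_elem :: "nat \<Rightarrow> nat \<Rightarrow> (nat \<Rightarrow> nat) set \<Rightarrow> (nat \<Rightarrow> nat) \<Rightarrow> (nat \<Rightarrow> nat)" where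
  "shift_elem l j F A = (if A l = j \<and> A(l := 1) \<notin> F then A(l := 1) else A)"

definition shift :: "nat \<Rightarrow> nat \<Rightarrow> (nat \<Rightarrow> nat) set \<Rightarrow> (nat \<Rightarrow> nat) set" where
  "shift l j F = shift_elem l j F ` F"

definition shift_resistant ::
  "nat \<Rightarrow> (nat \<Rightarrow> nat) \<Rightarrow> nat \<Rightarrow> nat \<Rightarrow> (nat \<Rightarrow> nat) set \<Rightarrow> bool" where
  "shift_resistant r n t l F \<longleftrightarrow> nontrivial_t_intersecting r t F \<and>
     (\<exists>x \<in> {1..n l} - {1}. card (common r (shift l x F)) = t)"

definition nbhd :: "(nat \<Rightarrow> nat) set \<Rightarrow> nat \<Rightarrow> nat \<Rightarrow> (nat \<Rightarrow> nat) set" where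
  "nbhd F x l = {A \<in> F. A l = x}"

end

theory Submission
  imports Defs
begin

lemma se_other: "l' \<noteq> l \<Longrightarrow> shift_elem l x F A l' = A l'"
  by (simp add: shift_elem_def)

lemma common_shift_other:
  assumes "l' \<noteq> l"
  shows "l' \<in> common r (shift l x F) \<longleftrightarrow> l' \<in> common r F"
  using assms by (auto simp: common_def shift_def se_other)

theorem lemma2p2:
  fixes r t l :: nat and n :: "nat \<Rightarrow> nat" and F :: "(nat \<Rightarrow> nat) set"
  assumes "r \<ge> 3" and "1 \<le> t" and "t \<le> r - 2"
    and "\<forall>i \<in> {1..r}. n i \<ge> 2"
    and "F \<subseteq> space r n"
    and "l \<in> {1..r}"
    and "shift_resistant r n t l F"
  shows "card (common r F) = t - 1 \<and>
    (\<exists>x \<in> {1..n l} - {1}.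
       nbhd F x l \<noteq> {} \<and> nbhd F 1 l \<noteq> {} \<and>
       (\<forall>A \<in> nbhd F x l. A(l := 1) \<notin> F) \<and>
       (\<forall>y \<in> {1..n l} - {1, x}. nbhd F y l = {}))"
proof -
  from assms(7) obtain x where x: "x \<in> {1..n l} - {1}"
    and cS: "card (common r (shift l x F)) = t"
    and cF: "card (common r F) < t"
    unfolding shift_resistant_def nontrivial_t_intersecting_def by blast
  let ?S = "shift l x F"
  have fin: "finite (common r F)" "finite (common r ?S)"
    by (auto simp: common_def)
  have eq: "common r ?S - {l} = common r F - {l}"
    by (rule set_eqI) (metis Diff_iff insertCI singletonD common_shift_other)
  have lS: "l \<in> common r ?S"
  proof (rule ccontr)
    assume "l \<notin> common r ?S"
    hence "common r ?S \<subseteq> common r F" using eq by blast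
    hence "card (common r ?S) \<le> card (common r F)" using fin card_mono by blast
    thus False using cS cF by simp
  qed
  have lF: "l \<notin> common r F"
  proof
    assume "l \<in> common r F"
    hence "common r ?S = common r F" using eq lS by blast
    thus False using cS cF by simp
  qed
  have "common r ?S = insert l (common r F)" using eq lS lF by blast
  hence c1: "card (common r F) = t - 1" using cS fin lF by simp
  from lF assms(6) obtain A B where AB: "A \<in> F" "B \<in> F" "A l \<noteq> B l"
    by (auto simp: common_def)
  have Sl: "\<forall>C\<in>F. \<forall>D\<in>F. shift_elem l x F C l = shift_elem l x F D l"
  proof -
    have "\<forall>C\<in>?S. \<forall>D\<in>?S. C l = D l" using lS unfolding common_def by blast
    thus ?thesis unfolding shift_def by (meson imageI)
  qed
  have x1: "x \<noteq> 1" using x by simp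
  have vals: "\<forall>C\<in>F. shift_elem l x F C l = 1"
  proof
    fix C assume C: "C \<in> F"
    show "shift_elem l x F C l = 1"
    proof (rule ccontr)
      assume ne: "shift_elem l x F C l \<noteq> 1"
      have "\<forall>D\<in>F. D l = shift_elem l x F C l"
      proof
        fix D assume D: "D \<in> F"
        have e: "shift_elem l x F D l = shift_elem l x F C l" using Sl C D by blast
        show "D l = shift_elem l x F C l"
          using e ne by (auto simp: shift_elem_def split: if_splits)
      qed
      hence "A l = B l" using AB(1,2) by (metis (no_types, lifting))
      thus False using AB(3) by simp
    qed
  qed
  have inx1: "\<forall>C\<in>F. C l = 1 \<or> (C l = x \<and> C(l := 1) \<notin> F)"
    using vals x1 by (auto simp: shift_elem_def split: if_splits)
  have ABv: "(A l = 1 \<and> B l = x) \<or> (A l = x \<and> B l = 1)"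
  proof -
    have "A l = 1 \<or> A l = x" using inx1 AB(1) by blast
    moreover have "B l = 1 \<or> B l = x" using inx1 AB(2) by blast
    ultimately show ?thesis using AB(3) by auto
  qed
  have ne1: "nbhd F 1 l \<noteq> {}" and nex: "nbhd F x l \<noteq> {}"
    using AB(1,2) ABv unfolding nbhd_def by blast+
  show ?thesis
  proof (intro conjI bexI[of _ x])
    show "card (common r F) = t - 1" by (rule c1)
    show "x \<in> {1..n l} - {1}" by (rule x)
    show "nbhd F x l \<noteq> {}" by (rule nex)
    show "nbhd F 1 l \<noteq> {}" by (rule ne1)
    show "\<forall>A\<in>nbhd F x l. A(l := 1) \<notin> F"
      using inx1 x1 unfolding nbhd_def by auto
    show "\<forall>y\<in>{1..n l} - {1, x}. nbhd F y l = {}"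
    proof
      fix y assume y: "y \<in> {1..n l} - {1, x}"
      show "nbhd F y l = {}"
      proof (rule ccontr)
        assume "nbhd F y l \<noteq> {}"
        then obtain C where "C \<in> F" "C l = y" unfolding nbhd_def by blast
        thus False using inx1 y by blast
      qed
    qed
  qed
qed

end
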